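(* Let $X=\{0,1\}^{\mathbb N}$ and define a relation $\alpha$ on $X$ by $x\alpha y \Leftrightarrow \exists_{i,j\in\mathbb N}(i\ne j\wedge x_i\ne y_i\wedge x_j\ne y_j)$. Then for all $x,y\in X$: $(x,y)\in\bigcap\langle\alpha\rangle^*$ if and only if there exists an injective function $f:\mathbb N\to\mathbb N$ such that for all $n\in\mathbb N$, $x_n\neq y_n \Leftrightarrow \exists_{m\in\mathbb N}\, n=f(m)$.
   Context: Constructive (intuitionistic) mathematics. The filled product of relations $\alpha,\beta$ on $X$ is $\alpha*\beta=\{(x,y)\mid \forall_{z\in X}(x\alpha z\vee z\beta y)\}$. $\langle\alpha\rangle^*$ is the smallest set of relations on $X$ containing $\alpha$ and closed under $*$, and $\bigcap\langle\alpha\rangle^*$ is the intersection of all its members. *)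

theory Defs
  imports Main
begin

text \<open>Filled product of relations on a type (the whole type plays the role of X).\<close>
definition filled_prod :: "'a rel \<Rightarrow> 'a rel \<Rightarrow> 'a rel" where
  "filled_prod a b = {(x, y). \<forall>z. (x, z) \<in> a \<or> (z, y) \<in> b}"

inductive_set filled_closure :: "'a rel \<Rightarrow> 'a rel set" for a :: "'a rel" where
  base: "a \<in> filled_closure a"
| prod: "b \<in> filled_closure a \<Longrightarrow> c \<in> filled_closure a \<Longrightarrow> filled_prod b c \<in> filled_closure a"

definition alpha2 :: "(nat \<Rightarrow> bool) rel" where
  "alpha2 = {(x, y). \<exists>i j. i \<noteq> j \<and> x i \<noteq> y i \<and> x j \<noteq> y j}"

end

theory Submission
  imports Defs "HOL-Library.Infinite_Set"
begin

definition Dif :: "(nat \<Rightarrow> bool) \<Rightarrow> (nat \<Rightarrow> bool) \<Rightarrow> nat set" where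
  "Dif x y = {n. x n \<noteq> y n}"

definition RR :: "nat \<Rightarrow> (nat \<Rightarrow> bool) rel" where
  "RR k = {(x, y). infinite (Dif x y) \<or> k \<le> card (Dif x y)}"

lemma Dif_sub: "Dif x y \<subseteq> Dif x z \<union> Dif z y"
  unfolding Dif_def by auto

lemma alpha2_RR: "alpha2 = RR 2"
proof -
  have "(\<exists>i j. i \<noteq> j \<and> i \<in> D \<and> j \<in> D) \<longleftrightarrow> infinite D \<or> 2 \<le> card D" for D :: "nat set"
  proof
    assume "\<exists>i j. i \<noteq> j \<and> i \<in> D \<and> j \<in> D"
    then obtain i j where "i \<noteq> j" "i \<in> D" "j \<in> D" by blast
    then have "{i, j} \<subseteq> D" by auto
    moreover have "card {i,j} = 2" using \<open>i \<noteq> j\<close> by simp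
    ultimately show "infinite D \<or> 2 \<le> card D" by (metis card_mono)
  next
    assume "infinite D \<or> 2 \<le> card D"
    then obtain T where "T \<subseteq> D" "card T = 2"
    proof
      assume "infinite D"
      then obtain T where "finite T" "card T = 2" "T \<subseteq> D" using infinite_arbitrarily_large by blast
      then show ?thesis using that by blast
    next
      assume "2 \<le> card D"
      then obtain T where "T \<subseteq> D" "card T = 2" by (rule obtain_subset_with_card_n)
      then show ?thesis using that by blast
    qed
    then show "\<exists>i j. i \<noteq> j \<and> i \<in> D \<and> j \<in> D" by (auto simp: card_2_iff)
  qed
  note key = this
  show ?thesis
  proof (rule set_eqI, clarify)
    fix x y :: "nat \<Rightarrow> bool"
    have "(x, y) \<in> alpha2 \<longleftrightarrow> (\<exists>i j. i \<noteq> j \<and> i \<in> Dif x y \<and> j \<in> Dif x y)"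
      unfolding alpha2_def Dif_def by simp
    also have "\<dots> \<longleftrightarrow> (x, y) \<in> RR 2" unfolding RR_def using key[of "Dif x y"] by simp
    finally show "(x, y) \<in> alpha2 \<longleftrightarrow> (x, y) \<in> RR 2" .
  qed
qed

lemma prod_RR:
  assumes "1 \<le> a" "1 \<le> b"
  shows "filled_prod (RR a) (RR b) = RR (a + b - 1)"
proof (rule set_eqI, clarify)
  fix x y :: "nat \<Rightarrow> bool"
  show "(x, y) \<in> filled_prod (RR a) (RR b) \<longleftrightarrow> (x, y) \<in> RR (a + b - 1)"
  proof
    assume H: "(x, y) \<in> filled_prod (RR a) (RR b)"
    show "(x, y) \<in> RR (a + b - 1)"
    proof (rule ccontr)
      assume N: "(x, y) \<notin> RR (a + b - 1)"
      let ?D = "Dif x y"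
      have fD: "finite ?D" and cD: "card ?D < a + b - 1" using N unfolding RR_def by auto
      obtain S where S: "S \<subseteq> ?D" "card S = min (card ?D) (a - 1)" "finite S"
        using obtain_subset_with_card_n[of "min (card ?D) (a - 1)" ?D] by auto
      define z where "z = (\<lambda>n. if n \<in> S then y n else x n)"
      have d1: "Dif x z = S" using S(1) unfolding z_def Dif_def by auto
      have d2: "Dif z y = ?D - S" unfolding z_def Dif_def by auto
      have c2: "card (?D - S) = card ?D - card S" using S fD by (simp add: card_Diff_subset)
      from H have "(x, z) \<in> RR a \<or> (z, y) \<in> RR b" unfolding filled_prod_def by auto
      moreover have "\<not> (x, z) \<in> RR a"
      proof -
        have "card S < a" using S(2) assms by linarith
        then show ?thesis unfolding RR_def using d1 S(3) by simp
      qed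
      moreover have "\<not> (z, y) \<in> RR b"
      proof -
        have "card ?D - card S < b" using S(2) assms cD by linarith
        then show ?thesis unfolding RR_def using d2 c2 fD by simp
      qed
      ultimately show False by blast
    qed
  next
    assume H: "(x, y) \<in> RR (a + b - 1)"
    show "(x, y) \<in> filled_prod (RR a) (RR b)"
    proof -
     have "(x, z) \<in> RR a \<or> (z, y) \<in> RR b" for z
     proof (rule ccontr)
        assume "\<not> ((x, z) \<in> RR a \<or> (z, y) \<in> RR b)"
        then have n1: "(x, z) \<notin> RR a" and n2: "(z, y) \<notin> RR b" by auto
        have f1: "finite (Dif x z)" "card (Dif x z) < a" using n1 unfolding RR_def by auto
        have f2: "finite (Dif z y)" "card (Dif z y) < b" using n2 unfolding RR_def by auto
        have fu: "finite (Dif x z \<union> Dif z y)" using f1 f2 by auto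
        have "finite (Dif x y)" by (rule finite_subset[OF Dif_sub fu])
        moreover have "card (Dif x y) \<le> card (Dif x z \<union> Dif z y)"
          by (rule card_mono[OF fu Dif_sub])
        moreover have "card (Dif x z \<union> Dif z y) \<le> card (Dif x z) + card (Dif z y)"
          by (rule card_Un_le)
        ultimately show False using H f1 f2 unfolding RR_def by auto
      qed
      then show ?thesis unfolding filled_prod_def by auto
    qed
  qed
qed

lemma closure_RR: "r \<in> filled_closure alpha2 \<Longrightarrow> \<exists>k\<ge>2. r = RR k"
proof (induction rule: filled_closure.induct)
  case base
  then show ?case using alpha2_RR by auto
next
  case (prod b c)
  then obtain k l where "k \<ge> 2" "l \<ge> 2" "b = RR k" "c = RR l" by auto
  then show ?case using prod_RR[of k l] by (intro exI[of _ "k + l - 1"]) auto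
qed

lemma RR_in: "RR (k + 2) \<in> filled_closure alpha2"
proof (induction k)
  case 0
  then show ?case using alpha2_RR filled_closure.base by (metis add_0)
next
  case (Suc k)
  have "filled_prod (RR 2) (RR (k + 2)) \<in> filled_closure alpha2"
    using filled_closure.prod[OF filled_closure.base Suc] alpha2_RR by simp
  moreover have "filled_prod (RR 2) (RR (k + 2)) = RR (Suc k + 2)"
    using prod_RR[of 2 "k+2"] by simp
  ultimately show ?case by simp
qed

lemma inter_iff: "(x, y) \<in> \<Inter> (filled_closure alpha2) \<longleftrightarrow> infinite (Dif x y)"
proof
  assume H: "(x, y) \<in> \<Inter> (filled_closure alpha2)"
  show "infinite (Dif x y)"
  proof
    assume f: "finite (Dif x y)"
    have "(x, y) \<in> RR (card (Dif x y) + 1 + 2)" using H RR_in by blast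
    then show False using f unfolding RR_def by auto
  qed
next
  assume "infinite (Dif x y)"
  then show "(x, y) \<in> \<Inter> (filled_closure alpha2)"
    using closure_RR unfolding RR_def by fastforce
qed

theorem mainTheorem2:
  fixes x y :: "nat \<Rightarrow> bool"
  shows "(x, y) \<in> \<Inter> (filled_closure alpha2) \<longleftrightarrow>
    (\<exists>f :: nat \<Rightarrow> nat. inj f \<and> (\<forall>n. x n \<noteq> y n \<longleftrightarrow> (\<exists>m. n = f m)))"
proof -
  have "infinite (Dif x y) \<longleftrightarrow> (\<exists>f :: nat \<Rightarrow> nat. inj f \<and> (\<forall>n. x n \<noteq> y n \<longleftrightarrow> (\<exists>m. n = f m)))"
  proof
    assume i: "infinite (Dif x y)"
    have "inj (enumerate (Dif x y))" using inj_enumerate[OF i] .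
    moreover have "range (enumerate (Dif x y)) = Dif x y" using range_enumerate[OF i] .
    moreover have "\<forall>n. x n \<noteq> y n \<longleftrightarrow> n \<in> Dif x y" unfolding Dif_def by simp
    ultimately have "inj (enumerate (Dif x y)) \<and> (\<forall>n. x n \<noteq> y n \<longleftrightarrow> (\<exists>m. n = enumerate (Dif x y) m))"
      by (metis rangeE rangeI)
    then show "\<exists>f :: nat \<Rightarrow> nat. inj f \<and> (\<forall>n. x n \<noteq> y n \<longleftrightarrow> (\<exists>m. n = f m))" by blast
  next
    assume "\<exists>f :: nat \<Rightarrow> nat. inj f \<and> (\<forall>n. x n \<noteq> y n \<longleftrightarrow> (\<exists>m. n = f m))"
    then obtain f :: "nat \<Rightarrow> nat" where f: "inj f" "\<forall>n. x n \<noteq> y n \<longleftrightarrow> (\<exists>m. n = f m)" by blast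
    then have "Dif x y = range f" unfolding Dif_def by auto
    then show "infinite (Dif x y)" using range_inj_infinite[OF f(1)] by simp
  qed
  then show ?thesis using inter_iff by simp
qed

end
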